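(* Let $R$ be a unital associative ring, $n=3$ and $k\ge2$. Then $${\cal S}={\rm dom}(J)\cap{\rm dom}(J^{-1})={\rm dom}(J^k)\quad\text{and}\quad \widehat{\cal S}={\rm dom}(\Phi)\cap{\rm dom}(\Phi^{-1})={\rm dom}(\Phi^k).$$ Furthermore, $J$ restricted to ${\cal S}$ is a bijection from ${\cal S}$ onto itself, and $\Phi$ restricted to $\widehat{\cal S}$ is a bijection from $\widehat{\cal S}$ onto itself.
   Context: $R^*$: units of $R$. $M_3^*(R)$: invertible $3\times3$ matrices; $M_3^\star(R)$: matrices with all entries in $R^*$. $J_1(M)=M^{-1}$ on $M_3^*(R)$; $J_2(M)_{jk}=(M_{kj})^{-1}$ on $M_3^\star(R)$; $J=J_2\circ J_1$, $J^{-1}=J_1\circ J_2$, where $g\circ f$ has domain $\{x\in{\rm dom}(f):f(x)\in{\rm dom}(g)\}$, and powers are iterated compositions. $\widehat M_3(R)$: matrices whose first row and column consist of $1$'s. For $A=\{a_{j,k}\}\in M_3^\star(R)$: $\Lambda^L(A)_{j,k}=a_{1,1}a_{j,1}^{-1}a_{j,k}a_{1,k}^{-1}$, $\Lambda^R(A)_{j,k}=a_{j,1}^{-1}a_{j,k}a_{1,k}^{-1}a_{1,1}$. $\Phi(A)=J_2(\Lambda^L(A^{-1}))$ with ${\rm dom}(\Phi)={\rm dom}(J)\cap\widehat M_3(R)\cap M_3^\star(R)$; $\Phi^{-1}(A)=\Lambda^R(J^{-1}(A))$ with domain $\widehat M_3(R)\cap\{M\in{\rm dom}(J^{-1}):J^{-1}(M)\in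 M_3^\star(R)\}$. ${\cal S}=\{M\in M_3(R):$ all square submatrices of $M$ (including $M$ and its $1\times1$ submatrices) are invertible and $J_2(M)$ is invertible$\}$, and $\widehat{\cal S}={\cal S}\cap\widehat M_3(R)$. *)

theory Defs
  imports "HOL-Analysis.Analysis"
begin

text \<open>3x3 matrices over a unital associative ring 'a (class ring_1) are 'a^3^3;
  M $ j $ k is the entry in row j, column k. The indices of type 3 are 1, 2, 3 (= 0);
  index 1 plays the role of the first row/column.
  Partial maps are modelled as option-valued functions; composition is map_comp
  whose domain is exactly that of the paper.\<close>

type_synonym 'a mat3 = "'a ^ 3 ^ 3"

definition is_unit :: "'a::ring_1 \<Rightarrow> bool" where
  "is_unit x \<longleftrightarrow> (\<exists>y. x * y = 1 \<and> y * x = 1)"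

definition uinv :: "'a::ring_1 \<Rightarrow> 'a" where
  "uinv x = (THE y. x * y = 1 \<and> y * x = 1)"

definition units_mat :: "'a::ring_1 mat3 \<Rightarrow> bool" where
  "units_mat M \<longleftrightarrow> (\<forall>j k. is_unit (M $ j $ k))"

definition J1 :: "'a::ring_1 mat3 \<Rightarrow> 'a mat3 option" where
  "J1 M = (if invertible M then Some (matrix_inv M) else None)"

definition J2 :: "'a::ring_1 mat3 \<Rightarrow> 'a mat3 option" where
  "J2 M = (if units_mat M then Some (\<chi> j k. uinv (M $ k $ j)) else None)"

definition J :: "'a::ring_1 mat3 \<Rightarrow> 'a mat3 option" where
  "J = J2 \<circ>\<^sub>m J1"

definition Jinv :: "'a::ring_1 mat3 \<Rightarrow> 'a mat3 option" where
  "Jinv = J1 \<circ>\<^sub>m J2"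

fun mpow :: "('b \<Rightarrow> 'b option) \<Rightarrow> nat \<Rightarrow> 'b \<Rightarrow> 'b option" where
  "mpow f 0 = Some"
| "mpow f (Suc k) = f \<circ>\<^sub>m mpow f k"

definition hat_mat :: "'a::ring_1 mat3 \<Rightarrow> bool" where
  "hat_mat M \<longleftrightarrow> (\<forall>k. M $ 1 $ k = 1 \<and> M $ k $ 1 = 1)"

definition LambdaL :: "'a::ring_1 mat3 \<Rightarrow> 'a mat3" where
  "LambdaL A = (\<chi> j k. A $ 1 $ 1 * uinv (A $ j $ 1) * A $ j $ k * uinv (A $ 1 $ k))"

definition LambdaR :: "'a::ring_1 mat3 \<Rightarrow> 'a mat3" where
  "LambdaR A = (\<chi> j k. uinv (A $ j $ 1) * A $ j $ k * uinv (A $ 1 $ k) * A $ 1 $ 1)"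

definition Phi :: "'a::ring_1 mat3 \<Rightarrow> 'a mat3 option" where
  "Phi A = (if A \<in> dom J \<and> hat_mat A \<and> units_mat A
            then J2 (LambdaL (matrix_inv A)) else None)"

definition Phiinv :: "'a::ring_1 mat3 \<Rightarrow> 'a mat3 option" where
  "Phiinv A = (if hat_mat A \<and> A \<in> dom Jinv \<and> units_mat (the (Jinv A))
               then Some (LambdaR (the (Jinv A))) else None)"

text \<open>The square submatrix of M with row set I and column set K (card I = card K)
  is invertible: there is a K x I matrix N with M|_{I,K} N = 1 and N M|_{I,K} = 1.
  This does not depend on the ordering of rows and columns.\<close>
definition sub_invertible :: "'a::ring_1 mat3 \<Rightarrow> 3 set \<Rightarrow> 3 set \<Rightarrow> bool" where
  "sub_invertible M I K \<longleftrightarrow>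
     (\<exists>N :: 3 \<Rightarrow> 3 \<Rightarrow> 'a.
        (\<forall>i\<in>I. \<forall>i'\<in>I. (\<Sum>k\<in>K. M $ i $ k * N k i') = (if i = i' then 1 else 0)) \<and>
        (\<forall>k\<in>K. \<forall>k'\<in>K. (\<Sum>i\<in>I. N k i * M $ i $ k') = (if k = k' then 1 else 0)))"

definition S_set :: "'a::ring_1 mat3 set" where
  "S_set = {M. (\<forall>I K. I \<noteq> {} \<and> card I = card K \<longrightarrow> sub_invertible M I K) \<and>
               (\<exists>N. J2 M = Some N \<and> invertible N)}"

definition S_hat :: "'a::ring_1 mat3 set" where
  "S_hat = S_set \<inter> {M. hat_mat M}"

end

theory Submission
  imports Defs
begin

lemma uinv_eq: fixes x :: "'a::ring_1" assumes "x*y = 1" "y*x = 1" shows "uinv x = y"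
  unfolding uinv_def
proof (rule the_equality)
  show "x * y = 1 \<and> y * x = 1" using assms by simp
  fix z assume "x * z = 1 \<and> z * x = 1"
  then have "z = (y*x)*z" using assms by simp
  also have "\<dots> = y*(x*z)" by (simp add: mult.assoc)
  also have "\<dots> = y" using \<open>x * z = 1 \<and> z * x = 1\<close> by simp
  finally show "z = y" .
qed

lemma unitD: fixes x :: "'a::ring_1" assumes "is_unit x"
  shows "x * uinv x = 1" "uinv x * x = 1"
  using assms uinv_eq unfolding is_unit_def by metis+

lemma unitI: fixes x :: "'a::ring_1" shows "x*y = 1 \<Longrightarrow> y*x = 1 \<Longrightarrow> is_unit x"
  unfolding is_unit_def by blast

lemma unit_uinv: fixes x :: "'a::ring_1" assumes "is_unit x"
  shows "is_unit (uinv x)" "uinv (uinv x) = x"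
  using unitD[OF assms] unitI uinv_eq by metis+

lemma unit_mult: fixes x :: "'a::ring_1" assumes "is_unit x" "is_unit y"
  shows "is_unit (x*y)" "uinv (x*y) = uinv y * uinv x"
proof -
  have "x*y*(uinv y * uinv x) = 1"
    by (metis assms mult.assoc mult_1_left unitD)
  moreover have "(uinv y * uinv x)*(x*y) = 1"
    by (metis assms mult.assoc mult_1_left unitD)
  ultimately show "is_unit (x*y)" "uinv (x*y) = uinv y * uinv x"
    using unitI uinv_eq by blast+
qed

lemma unit_one[simp]: "is_unit (1::'a::ring_1)" "uinv (1::'a::ring_1) = 1"
  using unitI uinv_eq by (metis mult_1_left)+

lemma unit_minus: fixes x :: "'a::ring_1" assumes "is_unit x"
  shows "is_unit (-x)" "uinv (-x) = - uinv x"
  using unitD[OF assms] unitI uinv_eq by (metis minus_mult_minus)+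

lemma unit_minus_iff: fixes x :: "'a::ring_1" shows "is_unit (-x) \<longleftrightarrow> is_unit x"
  by (metis unit_minus minus_minus)

lemma unit_cancel_left: fixes x :: "'a::ring_1" assumes "is_unit x" "is_unit (x*y)" shows "is_unit y"
proof -
  have "y = uinv x * (x*y)" by (simp add: mult.assoc[symmetric] unitD[OF assms(1)])
  then show ?thesis by (metis assms unit_mult(1) unit_uinv(1))
qed

lemma unit_cancel_right: fixes x :: "'a::ring_1" assumes "is_unit x" "is_unit (y*x)" shows "is_unit y"
proof -
  have "y = (y*x) * uinv x" by (simp add: mult.assoc unitD[OF assms(1)])
  then show ?thesis by (metis assms unit_mult(1) unit_uinv(1))
qed

lemma uinv_mult_cancel: fixes x :: "'a::ring_1" assumes "is_unit x"
  shows "x * (uinv x * y) = y" "uinv x * (x * y) = y" "y * x * uinv x = y" "y * uinv x * x = y"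
  by (simp add: mult.assoc[symmetric] unitD[OF assms], simp add: mult.assoc[symmetric] unitD[OF assms],
      simp add: mult.assoc unitD[OF assms], simp add: mult.assoc unitD[OF assms])

definition inv2 :: "'a::ring_1 \<Rightarrow> 'a \<Rightarrow> 'a \<Rightarrow> 'a \<Rightarrow> bool" where
  "inv2 a b c d \<longleftrightarrow> (\<exists>x y z w. a*x + b*z = 1 \<and> a*y + b*w = 0 \<and> c*x + d*z = 0 \<and> c*y + d*w = 1 \<and>
      x*a + y*c = 1 \<and> x*b + y*d = 0 \<and> z*a + w*c = 0 \<and> z*b + w*d = 1)"

lemma inv2_swap: "inv2 a b c d \<Longrightarrow> inv2 d c b a"
  unfolding inv2_def by (metis add.commute)

lemma inv2_swap_iff: "inv2 a b c d \<longleftrightarrow> inv2 d c b a"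
  using inv2_swap by blast

lemma inv2_pivot: fixes a :: "'a::ring_1" assumes u: "is_unit a"
  shows "inv2 a b c d \<longleftrightarrow> is_unit (d - c * uinv a * b)"
proof
  let ?a = "uinv a"
  assume "inv2 a b c d"
  then obtain x y z w where e: "a*x + b*z = 1" "a*y + b*w = 0" "c*x + d*z = 0" "c*y + d*w = 1"
      "x*a + y*c = 1" "x*b + y*d = 0" "z*a + w*c = 0" "z*b + w*d = 1" unfolding inv2_def by blast
  have y: "y = - (?a * b * w)"
  proof -
    have "y = ?a * (a*y)" by (simp add: uinv_mult_cancel u)
    also have "a*y = -(b*w)" using e(2) by (simp add: eq_neg_iff_add_eq_0)
    finally show ?thesis by (simp add: mult.assoc)
  qed
  have z: "z = - (w * c * ?a)"
  proof -
    have "z = (z*a) * ?a" by (simp add: unitD[OF u] mult.assoc)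
    also have "z*a = -(w*c)" using e(7) by (simp add: eq_neg_iff_add_eq_0)
    finally show ?thesis by (simp add: mult.assoc)
  qed
  have "(d - c * ?a * b) * w = 1" using e(4) unfolding y by (simp add: algebra_simps)
  moreover have "w * (d - c * ?a * b) = 1" using e(8) unfolding z by (simp add: algebra_simps)
  ultimately show "is_unit (d - c * ?a * b)" by (rule unitI)
next
  let ?a = "uinv a"
  let ?s = "d - c * ?a * b"
  assume s: "is_unit ?s"
  let ?t = "uinv ?s"
  have ts: "?s * ?t = 1" "?t * ?s = 1" using unitD[OF s] by auto
  have aa: "a * ?a = 1" "?a * a = 1" using unitD[OF u] by auto
  show "inv2 a b c d" unfolding inv2_def
  proof (intro exI conjI)
    show "a * (?a + ?a*b*?t*c*?a) + b * (- (?t*c*?a)) = 1"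
      by (simp add: algebra_simps uinv_mult_cancel[OF u] aa)
    show "a * (- (?a*b*?t)) + b * ?t = 0"
      by (simp add: algebra_simps uinv_mult_cancel[OF u] aa)
    have "c * (?a + ?a*b*?t*c*?a) + d * (- (?t*c*?a)) = c*?a - ?s*?t*c*?a"
      by (simp add: algebra_simps)
    then show "c * (?a + ?a*b*?t*c*?a) + d * (- (?t*c*?a)) = 0" using ts by simp
    have "c * (- (?a*b*?t)) + d * ?t = ?s * ?t"
      by (simp add: algebra_simps)
    then show "c * (- (?a*b*?t)) + d * ?t = 1" using ts by simp
    have "(?a + ?a*b*?t*c*?a) * a + (- (?a*b*?t)) * c = 1 + ?a*b*?t*c - ?a*b*?t*c"
      by (simp add: algebra_simps uinv_mult_cancel[OF u] aa)
    then show "(?a + ?a*b*?t*c*?a) * a + (- (?a*b*?t)) * c = 1" by simp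
    have "(?a + ?a*b*?t*c*?a) * b + (- (?a*b*?t)) * d = ?a*b - ?a*b*(?t*?s)"
      by (simp add: algebra_simps)
    then show "(?a + ?a*b*?t*c*?a) * b + (- (?a*b*?t)) * d = 0" using ts by simp
    show "(- (?t*c*?a)) * a + ?t * c = 0"
      by (simp add: algebra_simps uinv_mult_cancel[OF u] aa)
    have "(- (?t*c*?a)) * b + ?t * d = ?t * ?s"
      by (simp add: algebra_simps)
    then show "(- (?t*c*?a)) * b + ?t * d = 1" using ts by simp
  qed
qed


lemma inv2_J2: fixes a :: "'a::ring_1"
  assumes ua: "is_unit a" and ub: "is_unit b" and uc: "is_unit c" and ud: "is_unit d"
  shows "inv2 a b c d \<longleftrightarrow> inv2 (uinv a) (uinv c) (uinv b) (uinv d)"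
proof -
  have "inv2 (uinv a) (uinv c) (uinv b) (uinv d) \<longleftrightarrow> is_unit (uinv d - uinv b * a * uinv c)"
    using inv2_pivot[OF unit_uinv(1)[OF ua]] unit_uinv(2)[OF ua] by simp
  also have "uinv d - uinv b * a * uinv c = uinv b * (b * uinv d * c - a) * uinv c"
    by (simp add: algebra_simps uinv_mult_cancel ub uc unitD)
  also have "is_unit \<dots> \<longleftrightarrow> is_unit (b * uinv d * c - a)"
    by (metis ub uc unit_cancel_left unit_cancel_right unit_mult(1) unit_uinv(1))
  also have "\<dots> \<longleftrightarrow> is_unit (a - b * uinv d * c)"
    by (metis minus_diff_eq unit_minus_iff)
  also have "\<dots> \<longleftrightarrow> inv2 d c b a" using inv2_pivot[OF ud] by simp
  also have "\<dots> \<longleftrightarrow> inv2 a b c d" using inv2_swap_iff by metis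
  finally show ?thesis by simp
qed


lemma inv2_scale: fixes a :: "'a::ring_1"
  assumes u1: "is_unit u1" and u2: "is_unit u2" and p1: "is_unit p1" and p2: "is_unit p2"
  and "inv2 a b c d"
  shows "inv2 (u1*a*p1) (u1*b*p2) (u2*c*p1) (u2*d*p2)"
proof -
  obtain x y z w where e: "a*x + b*z = 1" "a*y + b*w = 0" "c*x + d*z = 0" "c*y + d*w = 1"
      "x*a + y*c = 1" "x*b + y*d = 0" "z*a + w*c = 0" "z*b + w*d = 1" using assms(5) unfolding inv2_def by blast
  note cc = uinv_mult_cancel[OF u1] uinv_mult_cancel[OF u2] uinv_mult_cancel[OF p1] uinv_mult_cancel[OF p2]
    unitD[OF u1] unitD[OF u2] unitD[OF p1] unitD[OF p2]
  let ?x = "uinv p1 * x * uinv u1" and ?y = "uinv p1 * y * uinv u2"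
  let ?z = "uinv p2 * z * uinv u1" and ?w = "uinv p2 * w * uinv u2"
  show ?thesis unfolding inv2_def
  proof (intro exI conjI)
    have "u1*a*p1 * ?x + u1*b*p2 * ?z = u1*(a*x+b*z)*uinv u1" by (simp add: algebra_simps cc)
    then show "u1*a*p1 * ?x + u1*b*p2 * ?z = 1" using e cc by simp
    have "u1*a*p1 * ?y + u1*b*p2 * ?w = u1*(a*y+b*w)*uinv u2" by (simp add: algebra_simps cc)
    then show "u1*a*p1 * ?y + u1*b*p2 * ?w = 0" using e cc by simp
    have "u2*c*p1 * ?x + u2*d*p2 * ?z = u2*(c*x+d*z)*uinv u1" by (simp add: algebra_simps cc)
    then show "u2*c*p1 * ?x + u2*d*p2 * ?z = 0" using e cc by simp
    have "u2*c*p1 * ?y + u2*d*p2 * ?w = u2*(c*y+d*w)*uinv u2" by (simp add: algebra_simps cc)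
    then show "u2*c*p1 * ?y + u2*d*p2 * ?w = 1" using e cc by simp
    have "?x * (u1*a*p1) + ?y * (u2*c*p1) = uinv p1*(x*a+y*c)*p1" by (simp add: algebra_simps cc)
    then show "?x * (u1*a*p1) + ?y * (u2*c*p1) = 1" using e cc by simp
    have "?x * (u1*b*p2) + ?y * (u2*d*p2) = uinv p1*(x*b+y*d)*p2" by (simp add: algebra_simps cc)
    then show "?x * (u1*b*p2) + ?y * (u2*d*p2) = 0" using e cc by simp
    have "?z * (u1*a*p1) + ?w * (u2*c*p1) = uinv p2*(z*a+w*c)*p1" by (simp add: algebra_simps cc)
    then show "?z * (u1*a*p1) + ?w * (u2*c*p1) = 0" using e cc by simp
    have "?z * (u1*b*p2) + ?w * (u2*d*p2) = uinv p2*(z*b+w*d)*p2" by (simp add: algebra_simps cc)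
    then show "?z * (u1*b*p2) + ?w * (u2*d*p2) = 1" using e cc by simp
  qed
qed

lemma inv2_scale_iff: fixes a :: "'a::ring_1"
  assumes u1: "is_unit u1" and u2: "is_unit u2" and p1: "is_unit p1" and p2: "is_unit p2"
  shows "inv2 (u1*a*p1) (u1*b*p2) (u2*c*p1) (u2*d*p2) \<longleftrightarrow> inv2 a b c d"
proof
  assume "inv2 (u1*a*p1) (u1*b*p2) (u2*c*p1) (u2*d*p2)"
  from inv2_scale[OF unit_uinv(1)[OF u1] unit_uinv(1)[OF u2] unit_uinv(1)[OF p1] unit_uinv(1)[OF p2] this]
  show "inv2 a b c d" by (simp add: mult.assoc uinv_mult_cancel u1 u2 p1 p2 unitD)
qed (rule inv2_scale[OF assms])


lemma sum3: "a \<noteq> b \<Longrightarrow> a \<noteq> c \<Longrightarrow> b \<noteq> c \<Longrightarrow> sum f (UNIV::3 set) = f a + f b + f c"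
proof -
  assume d: "a \<noteq> b" "a \<noteq> c" "b \<noteq> c"
  have c3: "card {a,b,c} = 3" using d by simp
  have "{a,b,c} = (UNIV::3 set)"
    by (rule card_subset_eq) (simp_all add: c3)
  then have "sum f (UNIV::3 set) = sum f {a,b,c}" by simp
  also have "\<dots> = f a + (f b + f c)" using d by simp
  finally show ?thesis by (simp add: add.assoc)
qed

lemma mm_entry: "((A::'a::ring_1 mat3) ** B) $ i $ j = sum (\<lambda>k. A$i$k * B$k$j) UNIV"
  by (simp add: matrix_matrix_mult_def)

lemma mat1_entry: "(mat 1 :: 'a::ring_1 mat3) $ i $ j = (if i = j then 1 else 0)"
  by (simp add: mat_def)


lemma qd_alg: fixes nda :: "'a::ring_1"
  assumes e1: "nda*mad + ndb*mbd + ndc*mcd = 1" and e2: "nea*mad + neb*mbd + nec*mcd = 0"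
    and e3: "nda*maf + ndb*mbf + ndc*mcf = 0" and e4: "nea*maf + neb*mbf + nec*mcf = 0"
    and un: "is_unit neb" and um: "is_unit mcf"
  shows "(nda - ndb*uinv neb*nea) * (mad - maf*uinv mcf*mcd) = 1"
proof -
  define u where "u = ndb * uinv neb"
  define w where "w = ndc - u*nec"
  have une: "u * neb = ndb" unfolding u_def by (simp add: mult.assoc unitD[OF un])
  have s1: "nda*mad = 1 - ndb*mbd - ndc*mcd" using e1 by (simp add: algebra_simps eq_diff_eq)
  have s2: "nea*mad = - (neb*mbd) - nec*mcd" using e2 by (simp add: algebra_simps eq_diff_eq eq_neg_iff_add_eq_0)
  have s3: "nda*maf = - (ndb*mbf) - ndc*mcf" using e3 by (simp add: algebra_simps eq_diff_eq eq_neg_iff_add_eq_0)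
  have s4: "nea*maf = - (neb*mbf) - nec*mcf" using e4 by (simp add: algebra_simps eq_diff_eq eq_neg_iff_add_eq_0)
  have h1: "(nda - u*nea)*mad = 1 - w*mcd"
  proof -
    have "(nda - u*nea)*mad = nda*mad - u*(nea*mad)" by (simp add: algebra_simps)
    also have "\<dots> = (1 - ndb*mbd - ndc*mcd) - u*(- (neb*mbd) - nec*mcd)" using s1 s2 by simp
    also have "\<dots> = 1 - ndb*mbd - ndc*mcd + (u*neb)*mbd + u*nec*mcd" by (simp add: algebra_simps)
    also have "\<dots> = 1 - w*mcd" unfolding une w_def by (simp add: algebra_simps)
    finally show ?thesis .
  qed
  have h2: "(nda - u*nea)*maf = - (w*mcf)"
  proof -
    have "(nda - u*nea)*maf = nda*maf - u*(nea*maf)" by (simp add: algebra_simps)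
    also have "\<dots> = (- (ndb*mbf) - ndc*mcf) - u*(- (neb*mbf) - nec*mcf)" using s3 s4 by simp
    also have "\<dots> = - (ndb*mbf) - ndc*mcf + (u*neb)*mbf + u*nec*mcf" by (simp add: algebra_simps)
    also have "\<dots> = - (w*mcf)" unfolding une w_def by (simp add: algebra_simps)
    finally show ?thesis .
  qed
  have "(nda - u*nea) * (mad - maf*uinv mcf*mcd) = (nda - u*nea)*mad - ((nda - u*nea)*maf)*uinv mcf*mcd"
    by (simp add: algebra_simps)
  also have "\<dots> = 1 - w*mcd + w*(mcf*uinv mcf)*mcd" unfolding h1 h2 by (simp add: algebra_simps)
  also have "\<dots> = 1" by (simp add: unitD[OF um])
  finally show ?thesis unfolding u_def by (simp add: mult.assoc)
qed

lemma NM_entries: fixes M N :: "'a::ring_1 mat3"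
  assumes NM: "N ** M = mat 1" and d: "a \<noteq> b" "a \<noteq> c" "b \<noteq> c"
  shows "N$x$a*M$a$y + N$x$b*M$b$y + N$x$c*M$c$y = (if x = y then 1 else 0)"
proof -
  have "(N ** M)$x$y = N$x$a*M$a$y + N$x$b*M$b$y + N$x$c*M$c$y"
    unfolding mm_entry by (rule sum3[OF d])
  then show ?thesis using NM by (simp add: mat1_entry)
qed

lemma qd_mat: fixes M N :: "'a::ring_1 mat3"
  assumes NM: "N ** M = mat 1" and d: "a \<noteq> b" "a \<noteq> c" "b \<noteq> c" "d \<noteq> e" "d \<noteq> f" "e \<noteq> f"
    and u: "is_unit (N$e$b)" "is_unit (M$c$f)"
  shows "(N$d$a - N$d$b * uinv (N$e$b) * N$e$a) * (M$a$d - M$a$f * uinv (M$c$f) * M$c$d) = 1"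
proof -
  note E = NM_entries[OF NM d(1-3)]
  have e1: "N$d$a*M$a$d + N$d$b*M$b$d + N$d$c*M$c$d = 1" using E[of d d] by simp
  have e2: "N$e$a*M$a$d + N$e$b*M$b$d + N$e$c*M$c$d = 0" using E[of e d] d by simp
  have e3: "N$d$a*M$a$f + N$d$b*M$b$f + N$d$c*M$c$f = 0" using E[of d f] d by simp
  have e4: "N$e$a*M$a$f + N$e$b*M$b$f + N$e$c*M$c$f = 0" using E[of e f] d by simp
  show ?thesis by (rule qd_alg[OF e1 e2 e3 e4 u])
qed

lemma schur_right: fixes x1 :: "'a::ring_1"
  assumes "x1*y1 + x2*y2 + x3*y3 = \<delta>" "x11*y1 + x12*y2 + x13*y3 = 0" "is_unit x11"
  shows "(x2 - x1*uinv x11*x12)*y2 + (x3 - x1*uinv x11*x13)*y3 = \<delta>"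
proof -
  have a: "x2*y2 + x3*y3 = \<delta> - x1*y1" using assms(1) by (simp add: algebra_simps eq_diff_eq)
  have b: "x12*y2 + x13*y3 = - (x11*y1)" using assms(2) by (simp add: algebra_simps eq_neg_iff_add_eq_0)
  have "(x2 - x1*uinv x11*x12)*y2 + (x3 - x1*uinv x11*x13)*y3 = (x2*y2 + x3*y3) - x1*uinv x11*(x12*y2 + x13*y3)"
    by (simp add: algebra_simps)
  also have "\<dots> = \<delta> - x1*y1 + x1*(uinv x11*x11)*y1" unfolding a b by (simp add: algebra_simps)
  also have "\<dots> = \<delta>" by (simp add: unitD[OF assms(3)])
  finally show ?thesis .
qed

lemma schur_left: fixes x1 :: "'a::ring_1"
  assumes "y1*x1k + y2*x2k + y3*x3k = \<delta>" "y1*x11 + y2*x21 + y3*x31 = 0" "is_unit x11"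
  shows "y2*(x2k - x21*uinv x11*x1k) + y3*(x3k - x31*uinv x11*x1k) = \<delta>"
proof -
  have a: "y2*x2k + y3*x3k = \<delta> - y1*x1k" using assms(1) by (simp add: algebra_simps eq_diff_eq)
  have b: "y2*x21 + y3*x31 = - (y1*x11)" using assms(2) by (simp add: algebra_simps eq_neg_iff_add_eq_0)
  have "y2*(x2k - x21*uinv x11*x1k) + y3*(x3k - x31*uinv x11*x1k) = (y2*x2k + y3*x3k) - (y2*x21 + y3*x31)*uinv x11*x1k"
    by (simp add: algebra_simps)
  also have "\<dots> = \<delta> - y1*x1k + y1*(x11*uinv x11)*x1k" unfolding a b by (simp add: algebra_simps)
  also have "\<dots> = \<delta>" by (simp add: unitD[OF assms(3)])
  finally show ?thesis .
qed


definition sch :: "'a::ring_1 mat3 \<Rightarrow> 3 \<Rightarrow> 3 \<Rightarrow> 'a" where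
  "sch X j k = X$j$k - X$j$1 * uinv (X$1$1) * X$1$k"

lemma d123: "(1::3) \<noteq> 2" "(1::3) \<noteq> 3" "(2::3) \<noteq> 3" "(2::3) \<noteq> 1" "(3::3) \<noteq> 1" "(3::3) \<noteq> 2"
  by simp_all

lemma mat3_eqI: fixes A B :: "'a mat3"
  assumes "A$1$1 = B$1$1" "A$1$2 = B$1$2" "A$1$3 = B$1$3" "A$2$1 = B$2$1" "A$2$2 = B$2$2" "A$2$3 = B$2$3"
    "A$3$1 = B$3$1" "A$3$2 = B$3$2" "A$3$3 = B$3$3"
  shows "A = B"
  unfolding vec_eq_iff forall_3 using assms by simp

definition m3 :: "'a \<Rightarrow> 'a \<Rightarrow> 'a \<Rightarrow> 'a \<Rightarrow> 'a \<Rightarrow> 'a \<Rightarrow> 'a \<Rightarrow> 'a \<Rightarrow> 'a \<Rightarrow> 'a mat3" where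
  "m3 a b c d e f g h i = (\<chi> j k. if j = 1 then (if k = 1 then a else if k = 2 then b else c)
     else if j = 2 then (if k = 1 then d else if k = 2 then e else f)
     else (if k = 1 then g else if k = 2 then h else i))"

lemma m3_entries[simp]: "m3 a b c d e f g h i $ 1 $ 1 = a" "m3 a b c d e f g h i $ 1 $ 2 = b"
  "m3 a b c d e f g h i $ 1 $ 3 = c" "m3 a b c d e f g h i $ 2 $ 1 = d" "m3 a b c d e f g h i $ 2 $ 2 = e"
  "m3 a b c d e f g h i $ 2 $ 3 = f" "m3 a b c d e f g h i $ 3 $ 1 = g" "m3 a b c d e f g h i $ 3 $ 2 = h"
  "m3 a b c d e f g h i $ 3 $ 3 = i"
  by (simp_all add: m3_def)

lemma mm3: "((A::'a::ring_1 mat3) ** B) $ i $ j = A$i$1 * B$1$j + A$i$2 * B$2$j + A$i$3 * B$3$j"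
  by (simp add: mm_entry sum_3)

lemma invertibleI: "(A::'a::ring_1 mat3) ** B = mat 1 \<Longrightarrow> B ** A = mat 1 \<Longrightarrow> invertible A"
  unfolding invertible_def by blast

lemma pivot3: fixes X :: "'a::ring_1 mat3" assumes u: "is_unit (X$1$1)"
  shows "invertible X \<longleftrightarrow> inv2 (sch X 2 2) (sch X 2 3) (sch X 3 2) (sch X 3 3)"
proof
  assume "invertible X"
  then obtain Y where XY: "X ** Y = mat 1" and YX: "Y ** X = mat 1" unfolding invertible_def by blast
  note E = NM_entries[OF XY d123(1-3)] and F = NM_entries[OF YX d123(1-3)]
  show "inv2 (sch X 2 2) (sch X 2 3) (sch X 3 2) (sch X 3 3)" unfolding inv2_def sch_def
    apply (rule exI[of _ "Y$2$2"], rule exI[of _ "Y$2$3"], rule exI[of _ "Y$3$2"], rule exI[of _ "Y$3$3"])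
    apply (intro conjI)
           apply (rule schur_right) using E[of 2 2] E[of 1 2] u apply simp_all
          apply (rule schur_right) using E[of 2 3] E[of 1 3] u apply simp_all
         apply (rule schur_right) using E[of 3 2] E[of 1 2] u apply simp_all
        apply (rule schur_right) using E[of 3 3] E[of 1 3] u apply simp_all
       apply (rule schur_left) using F[of 2 2] F[of 2 1] u apply simp_all
      apply (rule schur_left) using F[of 2 3] F[of 2 1] u apply simp_all
     apply (rule schur_left) using F[of 3 2] F[of 3 1] u apply simp_all
    apply (rule schur_left) using F[of 3 3] F[of 3 1] u apply simp_all
    done
next
  assume "inv2 (sch X 2 2) (sch X 2 3) (sch X 3 2) (sch X 3 3)"
  then obtain z22 z23 z32 z33 where z:
    "sch X 2 2*z22 + sch X 2 3*z32 = 1" "sch X 2 2*z23 + sch X 2 3*z33 = 0"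
    "sch X 3 2*z22 + sch X 3 3*z32 = 0" "sch X 3 2*z23 + sch X 3 3*z33 = 1"
    "z22* sch X 2 2 + z23* sch X 3 2 = 1" "z22* sch X 2 3 + z23* sch X 3 3 = 0"
    "z32* sch X 2 2 + z33* sch X 3 2 = 0" "z32* sch X 2 3 + z33* sch X 3 3 = 1"
    unfolding inv2_def by blast
  define t where "t = uinv (X$1$1)"
  have tt: "X$1$1 * t = 1" "t * X$1$1 = 1" unfolding t_def using unitD[OF u] by auto
  have tc: "\<And>y. X$1$1 * (t * y) = y" "\<And>y. t * (X$1$1 * y) = y"
    by (simp_all add: mult.assoc[symmetric] tt)
  define L where "L = m3 1 0 0 (X$2$1*t) 1 0 (X$3$1*t) 0 (1::'a)"
  define L' where "L' = m3 1 0 0 (-(X$2$1*t)) 1 0 (-(X$3$1*t)) 0 (1::'a)"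
  define U where "U = m3 1 (t*X$1$2) (t*X$1$3) 0 1 0 0 0 (1::'a)"
  define U' where "U' = m3 1 (-(t*X$1$2)) (-(t*X$1$3)) 0 1 0 0 0 (1::'a)"
  define B where "B = m3 (X$1$1) 0 0 0 (sch X 2 2) (sch X 2 3) 0 (sch X 3 2) (sch X 3 3)"
  define B' where "B' = m3 t 0 0 0 z22 z23 0 z32 z33"
  have "invertible L" by (rule invertibleI[of _ L'], (rule mat3_eqI; simp add: L_def L'_def mm3 mat1_entry)+)
  moreover have "invertible U" by (rule invertibleI[of _ U'], (rule mat3_eqI; simp add: U_def U'_def mm3 mat1_entry)+)
  moreover have "invertible B" by (rule invertibleI[of _ B'], (rule mat3_eqI; simp add: B_def B'_def mm3 mat1_entry tt z)+)
  ultimately have "invertible (L ** B ** U)" by (simp add: invertible_mult)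
  moreover have "L ** B ** U = X"
    by (rule mat3_eqI; simp add: L_def B_def U_def mm3 sch_def algebra_simps uinv_mult_cancel[OF u] tt tc flip: t_def)
  ultimately show "invertible X" by simp
qed


definition J2m :: "'a::ring_1 mat3 \<Rightarrow> 'a mat3" where
  "J2m M = (\<chi> j k. uinv (M $ k $ j))"

lemma J2m_entry[simp]: "J2m M $ j $ k = uinv (M $ k $ j)"
  by (simp add: J2m_def)

definition Hq :: "'a::ring_1 mat3 \<Rightarrow> 3 \<Rightarrow> 3 \<Rightarrow> 'a" where
  "Hq M j k = M$1$j * uinv (M$k$j) * M$k$1 - M$1$1"

lemma Hq_pair: fixes M N :: "'a::ring_1 mat3"
  assumes MN: "M ** N = mat 1" and NM: "N ** M = mat 1"
    and d: "1 \<noteq> j" "1 \<noteq> jb" "j \<noteq> jb" "1 \<noteq> k" "1 \<noteq> kb" "k \<noteq> kb"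
    and uM: "units_mat M" and uN: "units_mat N"
  shows "Hq N j k * Hq M kb jb = 1" "Hq M kb jb * Hq N j k = 1"
proof -
  have u1: "is_unit (N$k$j)" "is_unit (M$jb$kb)" using uM uN unfolding units_mat_def by auto
  have A: "(N$1$1 - N$1$j * uinv (N$k$j) * N$k$1) * (M$1$1 - M$1$kb * uinv (M$jb$kb) * M$jb$1) = 1"
    by (rule qd_mat[OF NM d(1-6) u1])
  have B: "(M$1$1 - M$1$kb * uinv (M$jb$kb) * M$jb$1) * (N$1$1 - N$1$j * uinv (N$k$j) * N$k$1) = 1"
    by (rule qd_mat[OF MN]) (use d u1 in auto)
  have hn: "Hq N j k = - (N$1$1 - N$1$j * uinv (N$k$j) * N$k$1)" unfolding Hq_def by simp
  have hm: "Hq M kb jb = - (M$1$1 - M$1$kb * uinv (M$jb$kb) * M$jb$1)" unfolding Hq_def by simp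
  show "Hq N j k * Hq M kb jb = 1" "Hq M kb jb * Hq N j k = 1" unfolding hn hm minus_mult_minus using A B by simp_all
qed

lemma sch_J2m: fixes M :: "'a::ring_1 mat3" assumes uM: "units_mat M"
  shows "sch (J2m M) j k = uinv (M$1$j) * Hq M j k * uinv (M$k$1)"
proof -
  have u: "is_unit (M$1$j)" "is_unit (M$k$1)" "is_unit (M$1$1)" "is_unit (M$k$j)"
    using uM unfolding units_mat_def by auto
  show ?thesis unfolding sch_def Hq_def J2m_entry unit_uinv(2)[OF u(3)]
    by (simp add: algebra_simps uinv_mult_cancel u unitD)
qed

lemma inv_J2m_H: fixes M :: "'a::ring_1 mat3" assumes uM: "units_mat M"
  shows "invertible (J2m M) \<longleftrightarrow> inv2 (Hq M 2 2) (Hq M 2 3) (Hq M 3 2) (Hq M 3 3)"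
proof -
  have u: "\<And>j k. is_unit (M$j$k)" using uM unfolding units_mat_def by auto
  have "invertible (J2m M) \<longleftrightarrow> inv2 (sch (J2m M) 2 2) (sch (J2m M) 2 3) (sch (J2m M) 3 2) (sch (J2m M) 3 3)"
    by (rule pivot3) (simp add: unit_uinv u)
  also have "\<dots> \<longleftrightarrow> inv2 (Hq M 2 2) (Hq M 2 3) (Hq M 3 2) (Hq M 3 3)"
    unfolding sch_J2m[OF uM] by (rule inv2_scale_iff) (simp_all add: unit_uinv u)
  finally show ?thesis .
qed

lemma star: fixes M N :: "'a::ring_1 mat3"
  assumes MN: "M ** N = mat 1" and NM: "N ** M = mat 1"
    and uM: "units_mat M" and uN: "units_mat N"
  shows "invertible (J2m M) \<longleftrightarrow> invertible (J2m N)"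
proof -
  have p: "Hq N 2 2 * Hq M 3 3 = 1" "Hq M 3 3 * Hq N 2 2 = 1"
    "Hq N 2 3 * Hq M 2 3 = 1" "Hq M 2 3 * Hq N 2 3 = 1"
    "Hq N 3 2 * Hq M 3 2 = 1" "Hq M 3 2 * Hq N 3 2 = 1"
    "Hq N 3 3 * Hq M 2 2 = 1" "Hq M 2 2 * Hq N 3 3 = 1"
    using Hq_pair[OF MN NM _ _ _ _ _ _ uM uN] by simp_all
  have un: "is_unit (Hq M 2 2)" "is_unit (Hq M 2 3)" "is_unit (Hq M 3 2)" "is_unit (Hq M 3 3)"
    using p unitI by metis+
  have eq: "Hq N 2 2 = uinv (Hq M 3 3)" "Hq N 2 3 = uinv (Hq M 2 3)" "Hq N 3 2 = uinv (Hq M 3 2)"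
    "Hq N 3 3 = uinv (Hq M 2 2)"
    using p uinv_eq by metis+
  have "invertible (J2m M) \<longleftrightarrow> inv2 (Hq M 2 2) (Hq M 2 3) (Hq M 3 2) (Hq M 3 3)"
    by (rule inv_J2m_H[OF uM])
  also have "\<dots> \<longleftrightarrow> inv2 (uinv (Hq M 2 2)) (uinv (Hq M 3 2)) (uinv (Hq M 2 3)) (uinv (Hq M 3 3))"
    by (rule inv2_J2[OF un])
  also have "\<dots> \<longleftrightarrow> inv2 (uinv (Hq M 3 3)) (uinv (Hq M 2 3)) (uinv (Hq M 3 2)) (uinv (Hq M 2 2))"
    by (rule inv2_swap_iff)
  also have "\<dots> \<longleftrightarrow> inv2 (Hq N 2 2) (Hq N 2 3) (Hq N 3 2) (Hq N 3 3)" unfolding eq ..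
  also have "\<dots> \<longleftrightarrow> invertible (J2m N)" by (rule inv_J2m_H[OF uN, symmetric])
  finally show ?thesis .
qed


lemma blk_alg: fixes a :: "'a::ring_1"
  assumes z: "a * x + b * z = 1" "a * y + b * w = 0" "c * x + d * z = 0" "c * y + d * w = 1"
      "x * a + y * c = 1" "x * b + y * d = 0" "z * a + w * c = 0" "z * b + w * d = 1"
    and r1: "B1 * w0 + a * q1 + b * q2 = 0" and r2: "B2 * w0 + c * q1 + d * q2 = 0"
    and r0: "m0 * w0 + m1 * q1 + m2 * q2 = 1"
    and c1: "w0 * m1 + h1 * a + h2 * c = 0" and c2: "w0 * m2 + h1 * b + h2 * d = 0"
    and c0: "w0 * m0 + h1 * B1 + h2 * B2 = 1"
  shows "is_unit w0"
proof -
  have r1': "a * q1 + b * q2 = - (B1 * w0)" using r1 by (simp add: algebra_simps eq_neg_iff_add_eq_0)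
  have r2': "c * q1 + d * q2 = - (B2 * w0)" using r2 by (simp add: algebra_simps eq_neg_iff_add_eq_0)
  have c1': "h1 * a + h2 * c = - (w0 * m1)" using c1 by (simp add: algebra_simps eq_neg_iff_add_eq_0)
  have c2': "h1 * b + h2 * d = - (w0 * m2)" using c2 by (simp add: algebra_simps eq_neg_iff_add_eq_0)
  have q1: "q1 = - ((x * B1 + y * B2) * w0)"
  proof -
    have "q1 = (x * a + y * c) * q1 + (x * b + y * d) * q2" using z by simp
    also have "\<dots> = x * (a * q1 + b * q2) + y * (c * q1 + d * q2)" by (simp add: algebra_simps)
    also have "\<dots> = - ((x * B1 + y * B2) * w0)" unfolding r1' r2' by (simp add: algebra_simps)
    finally show ?thesis .
  qed
  have q2: "q2 = - ((z * B1 + w * B2) * w0)"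
  proof -
    have "q2 = (z * a + w * c) * q1 + (z * b + w * d) * q2" using z by simp
    also have "\<dots> = z * (a * q1 + b * q2) + w * (c * q1 + d * q2)" by (simp add: algebra_simps)
    also have "\<dots> = - ((z * B1 + w * B2) * w0)" unfolding r1' r2' by (simp add: algebra_simps)
    finally show ?thesis .
  qed
  have h1: "h1 = - (w0 * (m1 * x + m2 * z))"
  proof -
    have "h1 = h1 * (a * x + b * z) + h2 * (c * x + d * z)" using z by simp
    also have "\<dots> = (h1 * a + h2 * c) * x + (h1 * b + h2 * d) * z" by (simp add: algebra_simps)
    also have "\<dots> = - (w0 * (m1 * x + m2 * z))" unfolding c1' c2' by (simp add: algebra_simps)
    finally show ?thesis .
  qed
  have h2: "h2 = - (w0 * (m1 * y + m2 * w))"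
  proof -
    have "h2 = h1 * (a * y + b * w) + h2 * (c * y + d * w)" using z by simp
    also have "\<dots> = (h1 * a + h2 * c) * y + (h1 * b + h2 * d) * w" by (simp add: algebra_simps)
    also have "\<dots> = - (w0 * (m1 * y + m2 * w))" unfolding c1' c2' by (simp add: algebra_simps)
    finally show ?thesis .
  qed
  define sc where "sc = m0 - m1 * (x * B1 + y * B2) - m2 * (z * B1 + w * B2)"
  have "sc * w0 = m0 * w0 + m1 * q1 + m2 * q2" unfolding sc_def q1 q2 by (simp add: algebra_simps)
  then have "sc * w0 = 1" using r0 by simp
  moreover have "w0 * sc = w0 * m0 + h1 * B1 + h2 * B2" unfolding sc_def h1 h2 by (simp add: algebra_simps)
  then have "w0 * sc = 1" using c0 by simp
  ultimately show ?thesis using unitI by blast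
qed

lemma block: fixes M N :: "'a::ring_1 mat3"
  assumes MN: "M ** N = mat 1" and NM: "N ** M = mat 1"
    and di: "i0 \<noteq> i1" "i0 \<noteq> i2" "i1 \<noteq> i2" and dk: "k0 \<noteq> k1" "k0 \<noteq> k2" "k1 \<noteq> k2"
  shows "inv2 (M$i1$k1) (M$i1$k2) (M$i2$k1) (M$i2$k2) \<longleftrightarrow> is_unit (N$k0$i0)"
proof
  note E = NM_entries[OF MN dk] and F = NM_entries[OF NM di]
  assume "inv2 (M$i1$k1) (M$i1$k2) (M$i2$k1) (M$i2$k2)"
  then obtain x y z w where z:
    "M$i1$k1 * x + M$i1$k2 * z = 1" "M$i1$k1 * y + M$i1$k2 * w = 0" "M$i2$k1 * x + M$i2$k2 * z = 0" "M$i2$k1 * y + M$i2$k2 * w = 1"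
    "x * M$i1$k1 + y * M$i2$k1 = 1" "x * M$i1$k2 + y * M$i2$k2 = 0" "z * M$i1$k1 + w * M$i2$k1 = 0" "z * M$i1$k2 + w * M$i2$k2 = 1"
    unfolding inv2_def by blast
  show "is_unit (N$k0$i0)"
    by (rule blk_alg[OF z]) (use E[of i1 i0] E[of i2 i0] E[of i0 i0] F[of k0 k1] F[of k0 k2] F[of k0 k0] di dk in simp_all)
next
  note E = NM_entries[OF MN dk] and F = NM_entries[OF NM di]
  assume u: "is_unit (N$k0$i0)"
  let ?Z = "\<lambda>k l. N$k$l - N$k$i0 * uinv (N$k0$i0) * N$k0$l"
  show "inv2 (M$i1$k1) (M$i1$k2) (M$i2$k1) (M$i2$k2)" unfolding inv2_def
    apply (rule exI[of _ "?Z k1 i1"], rule exI[of _ "?Z k1 i2"], rule exI[of _ "?Z k2 i1"], rule exI[of _ "?Z k2 i2"])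
    apply (intro conjI)
           apply (rule schur_left) using E[of i1 i1] E[of i1 i0] u di apply simp_all
          apply (rule schur_left) using E[of i1 i2] E[of i1 i0] u di apply simp_all
         apply (rule schur_left) using E[of i2 i1] E[of i2 i0] u di apply simp_all
        apply (rule schur_left) using E[of i2 i2] E[of i2 i0] u di apply simp_all
       apply (rule schur_right) using F[of k1 k1] F[of k0 k1] u dk apply simp_all
      apply (rule schur_right) using F[of k1 k2] F[of k0 k2] u dk apply simp_all
     apply (rule schur_right) using F[of k2 k1] F[of k0 k1] u dk apply simp_all
    apply (rule schur_right) using F[of k2 k2] F[of k0 k2] u dk apply simp_all
    done
qed


lemma sub1: "sub_invertible (M::'a::ring_1 mat3) {i} {k} \<longleftrightarrow> is_unit (M$i$k)"
proof
  assume "sub_invertible M {i} {k}"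
  then obtain N where "M$i$k * N k i = 1" "N k i * M$i$k = 1" unfolding sub_invertible_def by auto
  then show "is_unit (M$i$k)" by (rule unitI)
next
  assume "is_unit (M$i$k)"
  then show "sub_invertible M {i} {k}" unfolding sub_invertible_def
    by (intro exI[of _ "\<lambda>_ _. uinv (M$i$k)"]) (simp add: unitD)
qed

lemma sub2: fixes M :: "'a::ring_1 mat3" assumes d: "i1 \<noteq> i2" "k1 \<noteq> k2"
  shows "sub_invertible M {i1,i2} {k1,k2} \<longleftrightarrow> inv2 (M$i1$k1) (M$i1$k2) (M$i2$k1) (M$i2$k2)"
proof
  assume "sub_invertible M {i1,i2} {k1,k2}"
  then obtain N where A: "\<forall>i\<in>{i1,i2}. \<forall>i'\<in>{i1,i2}. (\<Sum>k\<in>{k1,k2}. M $ i $ k * N k i') = (if i = i' then 1 else 0)"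
    and B: "\<forall>k\<in>{k1,k2}. \<forall>k'\<in>{k1,k2}. (\<Sum>i\<in>{i1,i2}. N k i * M $ i $ k') = (if k = k' then 1 else 0)"
    unfolding sub_invertible_def by blast
  show "inv2 (M$i1$k1) (M$i1$k2) (M$i2$k1) (M$i2$k2)" unfolding inv2_def
    apply (rule exI[of _ "N k1 i1"], rule exI[of _ "N k1 i2"], rule exI[of _ "N k2 i1"], rule exI[of _ "N k2 i2"])
    using A B d by simp
next
  assume "inv2 (M$i1$k1) (M$i1$k2) (M$i2$k1) (M$i2$k2)"
  then obtain x y z w where z:
    "M$i1$k1 * x + M$i1$k2 * z = 1" "M$i1$k1 * y + M$i1$k2 * w = 0" "M$i2$k1 * x + M$i2$k2 * z = 0" "M$i2$k1 * y + M$i2$k2 * w = 1"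
    "x * M$i1$k1 + y * M$i2$k1 = 1" "x * M$i1$k2 + y * M$i2$k2 = 0" "z * M$i1$k1 + w * M$i2$k1 = 0" "z * M$i1$k2 + w * M$i2$k2 = 1"
    unfolding inv2_def by blast
  have s1: "\<And>f. sum f {k1,k2} = f k1 + f k2" and s2: "\<And>f. sum f {i1,i2} = f i1 + f i2" using d by simp_all
  have d': "i2 \<noteq> i1" "k2 \<noteq> k1" using d by auto
  show "sub_invertible M {i1,i2} {k1,k2}" unfolding sub_invertible_def s1 s2
    apply (rule exI[of _ "\<lambda>k i. if k = k1 then (if i = i1 then x else y) else (if i = i1 then z else w)"])
    apply (intro conjI ballI)
    apply (simp only: insert_iff empty_iff simp_thms)
    apply (elim disjE; simp add: d d' z)
    apply (simp only: insert_iff empty_iff simp_thms)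
    apply (elim disjE; simp add: d d' z)
    done
qed

lemma sub3: "sub_invertible (M::'a::ring_1 mat3) UNIV UNIV \<longleftrightarrow> invertible M"
proof
  assume "sub_invertible M UNIV UNIV"
  then obtain N where A: "\<And>i i'. (\<Sum>k\<in>UNIV. M $ i $ k * N k i') = (if i = i' then 1 else 0)"
    and B: "\<And>k k'. (\<Sum>i\<in>UNIV. N k i * M $ i $ k') = (if k = k' then 1 else 0)"
    unfolding sub_invertible_def by blast
  show "invertible M"
    by (rule invertibleI[of _ "\<chi> k i. N k i"]) (simp_all add: vec_eq_iff mm_entry mat1_entry A B)
next
  assume "invertible M"
  then obtain Y where "M ** Y = mat 1" "Y ** M = mat 1" unfolding invertible_def by blast
  then show "sub_invertible M UNIV UNIV" unfolding sub_invertible_def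
    by (intro exI[of _ "\<lambda>k i. Y$k$i"]) (simp add: vec_eq_iff mm_entry mat1_entry)
qed

lemma third: fixes a b :: 3 assumes "a \<noteq> b" shows "\<exists>c. c \<noteq> a \<and> c \<noteq> b"
proof -
  have "card {a,b} = 2" using assms by simp
  then have "{a,b} \<noteq> UNIV"
  proof (intro notI)
    assume "card {a,b} = 2" "{a,b} = UNIV"
    then have "card (UNIV::3 set) = 2" by simp
    then show False by simp
  qed
  then show ?thesis by blast
qed

lemma other2: fixes a :: 3 shows "\<exists>b c. a \<noteq> b \<and> a \<noteq> c \<and> b \<noteq> c"
proof -
  have "a = 1 \<or> a = 2 \<or> a = 3" by (rule exhaust_3)
  then show ?thesis
  proof (elim disjE)
    assume "a = 1" then show ?thesis by (intro exI[of _ 2] exI[of _ 3]) simp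
  next
    assume "a = 2" then show ?thesis by (intro exI[of _ 1] exI[of _ 3]) simp
  next
    assume "a = 3" then show ?thesis by (intro exI[of _ 1] exI[of _ 2]) simp
  qed
qed

lemma card3_cases: fixes I :: "3 set" assumes "I \<noteq> {}"
  shows "(\<exists>i. I = {i}) \<or> (\<exists>i j. i \<noteq> j \<and> I = {i,j}) \<or> I = UNIV"
proof -
  have f: "finite I" by simp
  have "card I \<le> 3" using card_mono[of UNIV I] by simp
  moreover have "card I \<noteq> 0" using assms f by simp
  ultimately have "card I = 1 \<or> card I = 2 \<or> card I = 3" by linarith
  then show ?thesis
  proof (elim disjE)
    assume "card I = 1" then show ?thesis by (auto simp: card_1_singleton_iff)
  next
    assume "card I = 2" then show ?thesis by (auto simp: card_2_iff)
  next
    assume "card I = 3" then have "I = UNIV" by (intro card_subset_eq) simp_all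
    then show ?thesis by simp
  qed
qed

lemma matrix_inv_props: fixes M :: "'a::ring_1 mat3" assumes "invertible M"
  shows "M ** matrix_inv M = mat 1" "matrix_inv M ** M = mat 1"
  using someI_ex[OF assms[unfolded invertible_def]] unfolding matrix_inv_def by auto

lemma matrix_inv_unique: fixes M N :: "'a::ring_1 mat3" assumes "M ** N = mat 1" "N ** M = mat 1"
  shows "matrix_inv M = N"
proof -
  have i: "invertible M" using assms invertibleI by blast
  have "matrix_inv M = matrix_inv M ** (M ** N)" using assms by simp
  also have "\<dots> = (matrix_inv M ** M) ** N" by (simp add: matrix_mul_assoc)
  also have "\<dots> = N" using matrix_inv_props[OF i] by simp
  finally show ?thesis .
qed



definition allblocks :: "'a::ring_1 mat3 \<Rightarrow> bool" where
  "allblocks X \<longleftrightarrow> (\<forall>i1 i2 k1 k2. i1 \<noteq> i2 \<and> k1 \<noteq> k2 \<longrightarrow> inv2 (X$i1$k1) (X$i1$k2) (X$i2$k1) (X$i2$k2))"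

lemma units_allblocks: fixes X Y :: "'a::ring_1 mat3"
  assumes XY: "X ** Y = mat 1" and YX: "Y ** X = mat 1"
  shows "units_mat Y \<longleftrightarrow> allblocks X"
proof
  assume u: "units_mat Y"
  show "allblocks X" unfolding allblocks_def
  proof (intro allI impI, elim conjE)
    fix i1 i2 k1 k2 :: 3 assume d: "i1 \<noteq> i2" "k1 \<noteq> k2"
    obtain i0 where i0: "i0 \<noteq> i1" "i0 \<noteq> i2" using third[OF d(1)] by blast
    obtain k0 where k0: "k0 \<noteq> k1" "k0 \<noteq> k2" using third[OF d(2)] by blast
    have "is_unit (Y$k0$i0)" using u unfolding units_mat_def by blast
    then show "inv2 (X$i1$k1) (X$i1$k2) (X$i2$k1) (X$i2$k2)"
      using block[OF XY YX, of i0 i1 i2 k0 k1 k2] i0 k0 d by simp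
  qed
next
  assume a: "allblocks X"
  show "units_mat Y" unfolding units_mat_def
  proof (intro allI)
    fix k0 i0 :: 3
    obtain i1 i2 where i: "i0 \<noteq> i1" "i0 \<noteq> i2" "i1 \<noteq> i2" using other2 by blast
    obtain k1 k2 where k: "k0 \<noteq> k1" "k0 \<noteq> k2" "k1 \<noteq> k2" using other2 by blast
    have "inv2 (X$i1$k1) (X$i1$k2) (X$i2$k1) (X$i2$k2)" using a i k unfolding allblocks_def by blast
    then show "is_unit (Y$k0$i0)" using block[OF XY YX i k] by simp
  qed
qed

lemma units_J2m: "units_mat (M::'a::ring_1 mat3) \<Longrightarrow> units_mat (J2m M)"
  unfolding units_mat_def by (simp add: unit_uinv)

lemma J2m_J2m: "units_mat (M::'a::ring_1 mat3) \<Longrightarrow> J2m (J2m M) = M"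
  unfolding units_mat_def by (simp add: vec_eq_iff unit_uinv)

lemma allblocks_J2m: fixes M :: "'a::ring_1 mat3" assumes u: "units_mat M"
  shows "allblocks (J2m M) \<longleftrightarrow> allblocks M"
proof -
  have uu: "\<And>j k. is_unit (M$j$k)" using u unfolding units_mat_def by auto
  have "\<And>i1 i2 k1 k2. inv2 (J2m M$i1$k1) (J2m M$i1$k2) (J2m M$i2$k1) (J2m M$i2$k2) \<longleftrightarrow>
        inv2 (M$k1$i1) (M$k1$i2) (M$k2$i1) (M$k2$i2)"
    by (simp add: inv2_J2 uu)
  then show ?thesis unfolding allblocks_def by (auto simp del: J2m_entry)
qed

lemma S_char: fixes M :: "'a::ring_1 mat3"
  shows "M \<in> S_set \<longleftrightarrow> invertible M \<and> units_mat M \<and> units_mat (matrix_inv M) \<and> invertible (J2m M)"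
proof -
  have J2e: "(\<exists>N. J2 M = Some N \<and> invertible N) \<longleftrightarrow> units_mat M \<and> invertible (J2m M)"
    unfolding J2_def J2m_def by simp
  have "(\<forall>I K. I \<noteq> {} \<and> card I = card K \<longrightarrow> sub_invertible M I K) \<longleftrightarrow>
        invertible M \<and> units_mat M \<and> units_mat (matrix_inv M)" (is "?L \<longleftrightarrow> ?R")
  proof
    assume L: ?L
    have inv: "invertible M" using L[rule_format, of UNIV UNIV] sub3 by auto
    have un: "units_mat M" unfolding units_mat_def
    proof (intro allI)
      fix j k :: 3
      have "sub_invertible M {j} {k}" using L[rule_format, of "{j}" "{k}"] by simp
      then show "is_unit (M$j$k)" using sub1 by blast
    qed
    have "allblocks M" unfolding allblocks_def
    proof (intro allI impI, elim conjE)
      fix i1 i2 k1 k2 :: 3 assume d: "i1 \<noteq> i2" "k1 \<noteq> k2"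
      have "sub_invertible M {i1,i2} {k1,k2}" by (rule L[rule_format]) (simp add: d)
      with sub2[OF d] show "inv2 (M$i1$k1) (M$i1$k2) (M$i2$k1) (M$i2$k2)" by blast
    qed
    then show ?R using inv un units_allblocks[OF matrix_inv_props[OF inv]] by simp
  next
    assume R: ?R
    then have inv: "invertible M" and un: "units_mat M" and ab: "allblocks M"
      using units_allblocks[OF matrix_inv_props] by auto
    show ?L
    proof (intro allI impI, elim conjE)
      fix I K :: "3 set" assume ne: "I \<noteq> {}" and c: "card I = card K"
      have "K \<noteq> {}" using ne c by auto
      from card3_cases[OF ne] show "sub_invertible M I K"
      proof (elim disjE exE conjE)
        fix i assume I: "I = {i}"
        then have "card K = 1" using c by simp
        then obtain k where "K = {k}" by (auto simp: card_1_singleton_iff)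
        moreover have "is_unit (M$i$k)" using un unfolding units_mat_def by blast
        ultimately show ?thesis using I by (simp add: sub1[of M i k, THEN iffD2])
      next
        fix i j assume d: "i \<noteq> j" and I: "I = {i,j}"
        then have "card K = 2" using c by simp
        then obtain k l where K: "k \<noteq> l" "K = {k,l}" by (auto simp: card_2_iff)
        have "inv2 (M$i$k) (M$i$l) (M$j$k) (M$j$l)" using ab d K unfolding allblocks_def by blast
        then show ?thesis unfolding I K(2) by (rule sub2[OF d K(1), THEN iffD2])
      next
        assume I: "I = UNIV"
        then have "card K = 3" using c by simp
        then have "K = UNIV" by (intro card_subset_eq) simp_all
        then show ?thesis unfolding I using sub3[THEN iffD2, OF inv] by simp
      qed
    qed
  qed
  then show ?thesis unfolding S_set_def using J2e by auto
qed


lemma J2_eq: "J2 M = (if units_mat M then Some (J2m M) else None)"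
  unfolding J2_def J2m_def by simp

lemma J_eq: "J M = (if invertible M \<and> units_mat (matrix_inv M) then Some (J2m (matrix_inv M)) else None)"
  unfolding J_def map_comp_def J1_def J2_eq by simp

lemma Jinv_eq: "Jinv M = (if units_mat M \<and> invertible (J2m M) then Some (matrix_inv (J2m M)) else None)"
  unfolding Jinv_def map_comp_def J1_def J2_eq by simp

lemma part1: "(S_set :: 'a::ring_1 mat3 set) = dom J \<inter> dom Jinv"
  by (rule set_eqI) (simp add: S_char dom_def J_eq Jinv_eq)

lemma inv_of_inv: fixes M :: "'a::ring_1 mat3" assumes "invertible M"
  shows "invertible (matrix_inv M)" "matrix_inv (matrix_inv M) = M"
  using matrix_inv_props[OF assms] invertibleI matrix_inv_unique by blast+

lemma J_S: fixes M :: "'a::ring_1 mat3" assumes "M \<in> S_set"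
  shows "J M = Some (J2m (matrix_inv M))" "J2m (matrix_inv M) \<in> S_set"
    "matrix_inv (J2m (J2m (matrix_inv M))) = M"
proof -
  have inv: "invertible M" and uM: "units_mat M" and uN: "units_mat (matrix_inv M)" and iJ: "invertible (J2m M)"
    using assms S_char by auto
  let ?N = "matrix_inv M"
  note MN = matrix_inv_props[OF inv]
  show "J M = Some (J2m ?N)" unfolding J_eq using inv uN by simp
  have iP: "invertible (J2m ?N)" using star[OF MN uM uN] iJ by simp
  have uP: "units_mat (J2m ?N)" by (rule units_J2m[OF uN])
  have "units_mat (matrix_inv (J2m ?N)) \<longleftrightarrow> allblocks (J2m ?N)"
    by (rule units_allblocks[OF matrix_inv_props[OF iP]])
  also have "\<dots> \<longleftrightarrow> allblocks ?N" by (rule allblocks_J2m[OF uN])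
  also have "\<dots> \<longleftrightarrow> units_mat M" by (rule units_allblocks[OF MN(2) MN(1), symmetric])
  finally have uPi: "units_mat (matrix_inv (J2m ?N))" using uM by simp
  have "invertible (J2m (J2m ?N))" unfolding J2m_J2m[OF uN] using inv_of_inv[OF inv] by simp
  then show "J2m ?N \<in> S_set" using S_char iP uP uPi by blast
  show "matrix_inv (J2m (J2m ?N)) = M" unfolding J2m_J2m[OF uN] using inv_of_inv[OF inv] by simp
qed

lemma Jinv_S: fixes M :: "'a::ring_1 mat3" assumes "M \<in> S_set"
  shows "Jinv M = Some (matrix_inv (J2m M))" "matrix_inv (J2m M) \<in> S_set"
    "J2m (matrix_inv (matrix_inv (J2m M))) = M"
proof -
  have inv: "invertible M" and uM: "units_mat M" and uN: "units_mat (matrix_inv M)" and iJ: "invertible (J2m M)"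
    using assms S_char by auto
  let ?Q = "J2m M"
  let ?R = "matrix_inv ?Q"
  note QR = matrix_inv_props[OF iJ]
  show "Jinv M = Some ?R" unfolding Jinv_eq using uM iJ by simp
  have uQ: "units_mat ?Q" by (rule units_J2m[OF uM])
  have iR: "invertible ?R" by (rule inv_of_inv(1)[OF iJ])
  have RR: "matrix_inv ?R = ?Q" by (rule inv_of_inv(2)[OF iJ])
  have "units_mat ?R \<longleftrightarrow> allblocks ?Q" by (rule units_allblocks[OF QR])
  also have "\<dots> \<longleftrightarrow> allblocks M" by (rule allblocks_J2m[OF uM])
  also have "\<dots> \<longleftrightarrow> units_mat (matrix_inv M)" by (rule units_allblocks[OF matrix_inv_props[OF inv], symmetric])
  finally have uR: "units_mat ?R" using uN by simp
  have "invertible (J2m ?Q) \<longleftrightarrow> invertible (J2m ?R)" by (rule star[OF QR uQ uR])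
  then have "invertible (J2m ?R)" unfolding J2m_J2m[OF uM] using inv by simp
  then show "?R \<in> S_set" using S_char iR uR RR uQ by metis
  show "J2m (matrix_inv ?R) = M" unfolding RR J2m_J2m[OF uM] ..
qed

lemma domJ2: fixes M :: "'a::ring_1 mat3" assumes "M \<in> dom J" "the (J M) \<in> dom J"
  shows "M \<in> S_set"
proof -
  have inv: "invertible M" and uN: "units_mat (matrix_inv M)"
    using assms(1) unfolding J_eq dom_def by (auto split: if_splits)
  let ?N = "matrix_inv M"
  note MN = matrix_inv_props[OF inv]
  have JM: "the (J M) = J2m ?N" unfolding J_eq using inv uN by simp
  have "J2m ?N \<in> dom J" using assms(2) JM by simp
  then have iP: "invertible (J2m ?N)" and uPi: "units_mat (matrix_inv (J2m ?N))"
    unfolding J_eq dom_def by (auto split: if_splits)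
  have "units_mat (matrix_inv (J2m ?N)) \<longleftrightarrow> allblocks (J2m ?N)"
    by (rule units_allblocks[OF matrix_inv_props[OF iP]])
  also have "\<dots> \<longleftrightarrow> allblocks ?N" by (rule allblocks_J2m[OF uN])
  also have "\<dots> \<longleftrightarrow> units_mat M" by (rule units_allblocks[OF MN(2) MN(1), symmetric])
  finally have uM: "units_mat M" using uPi by simp
  have "invertible (J2m M)" using star[OF MN uM uN] iP by simp
  then show ?thesis using S_char inv uM uN by blast
qed



lemma mpow_dom_Suc: "dom (mpow f (Suc k)) \<subseteq> dom (mpow f k)"
  by (auto simp: map_comp_def dom_def split: option.splits)

lemma mpow_dom_le: "k \<le> m \<Longrightarrow> dom (mpow f m) \<subseteq> dom (mpow f k)"
proof (induction m)
  case 0 then show ?case by simp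
next
  case (Suc m)
  then show ?case using mpow_dom_Suc[of f m] by (cases "k = Suc m") auto
qed

lemma mpow_2: "x \<in> dom (mpow f 2) \<Longrightarrow> x \<in> dom f \<and> the (f x) \<in> dom f"
  by (auto simp: numeral_2_eq_2 map_comp_def dom_def split: option.splits)

lemma mpow_closed: assumes "\<And>x. x \<in> A \<Longrightarrow> \<exists>y\<in>A. f x = Some y" and "x \<in> A"
  shows "\<exists>y\<in>A. mpow f k x = Some y"
proof (induction k)
  case 0 then show ?case using assms(2) by simp
next
  case (Suc k)
  then obtain y where "y \<in> A" "mpow f k x = Some y" by blast
  then show ?case using assms(1)[of y] by (auto simp: map_comp_def)
qed

lemma dom_mpow_eq: assumes "\<And>x. x \<in> A \<Longrightarrow> \<exists>y\<in>A. f x = Some y"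
  and "\<And>x. x \<in> dom f \<Longrightarrow> the (f x) \<in> dom f \<Longrightarrow> x \<in> A" and "k \<ge> 2"
  shows "dom (mpow f k) = A"
proof
  show "dom (mpow f k) \<subseteq> A"
  proof
    fix x assume "x \<in> dom (mpow f k)"
    then have "x \<in> dom (mpow f 2)" using mpow_dom_le[OF assms(3), of f] by (rule subsetD[rotated])
    then have "x \<in> dom f \<and> the (f x) \<in> dom f" by (rule mpow_2)
    then show "x \<in> A" using assms(2) by blast
  qed
  show "A \<subseteq> dom (mpow f k)"
  proof
    fix x assume "x \<in> A"
    then obtain y where "mpow f k x = Some y" using mpow_closed[of A f, OF assms(1)] by blast
    then show "x \<in> dom (mpow f k)" by (simp add: domI)
  qed
qed



lemma J_part: fixes k :: nat assumes "k \<ge> 2"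
  shows "dom J \<inter> dom Jinv = dom (mpow (J :: 'a::ring_1 mat3 \<Rightarrow> _) k)"
    "bij_betw (\<lambda>M. the (J M)) (S_set :: 'a mat3 set) S_set"
proof -
  have e: "dom (mpow (J :: 'a::ring_1 mat3 \<Rightarrow> _) k) = S_set"
    by (rule dom_mpow_eq[of S_set J, OF _ domJ2 assms]) (use J_S in blast)
  show "dom J \<inter> dom Jinv = dom (mpow (J :: 'a::ring_1 mat3 \<Rightarrow> _) k)" unfolding e by (rule part1[symmetric])
  show "bij_betw (\<lambda>M. the (J M)) (S_set :: 'a mat3 set) S_set"
  proof (rule bij_betw_byWitness[where f' = "\<lambda>M. the (Jinv M)"])
    show "\<forall>a\<in>S_set. the (Jinv (the (J a))) = (a::'a mat3)"
    proof
      fix a :: "'a mat3" assume a: "a \<in> S_set"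
      show "the (Jinv (the (J a))) = a" using J_S[OF a] Jinv_S(1)[OF J_S(2)[OF a]] by simp
    qed
    show "\<forall>a\<in>S_set. the (J (the (Jinv a))) = (a::'a mat3)"
    proof
      fix a :: "'a mat3" assume a: "a \<in> S_set"
      show "the (J (the (Jinv a))) = a" using Jinv_S[OF a] J_S(1)[OF Jinv_S(2)[OF a]] by simp
    qed
    show "(\<lambda>M. the (J M)) ` S_set \<subseteq> (S_set :: 'a mat3 set)"
    proof (rule image_subsetI)
      fix M :: "'a mat3" assume a: "M \<in> S_set"
      show "the (J M) \<in> S_set" using J_S[OF a] by simp
    qed
    show "(\<lambda>M. the (Jinv M)) ` S_set \<subseteq> (S_set :: 'a mat3 set)"
    proof (rule image_subsetI)
      fix M :: "'a mat3" assume a: "M \<in> S_set"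
      show "the (Jinv M) \<in> S_set" using Jinv_S[OF a] by simp
    qed
  qed
qed


definition sc :: "(3 \<Rightarrow> 'a::ring_1) \<Rightarrow> 'a mat3 \<Rightarrow> (3 \<Rightarrow> 'a) \<Rightarrow> 'a mat3" where
  "sc d M e = (\<chi> j k. d j * M$j$k * e k)"

lemma sc_entry[simp]: "sc d M e $ j $ k = d j * M$j$k * e k"
  by (simp add: sc_def)

definition uf :: "(3 \<Rightarrow> 'a::ring_1) \<Rightarrow> bool" where "uf d \<longleftrightarrow> (\<forall>j. is_unit (d j))"

lemma uf_inv: "uf d \<Longrightarrow> uf (\<lambda>j. uinv (d j))"
  unfolding uf_def by (simp add: unit_uinv)

lemma units_sc: "units_mat M \<Longrightarrow> uf d \<Longrightarrow> uf e \<Longrightarrow> units_mat (sc d M e)"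
  unfolding units_mat_def uf_def by (simp add: unit_mult)

lemma J2m_sc: fixes M :: "'a::ring_1 mat3" assumes "units_mat M" "uf d" "uf e"
  shows "J2m (sc d M e) = sc (\<lambda>j. uinv (e j)) (J2m M) (\<lambda>k. uinv (d k))"
proof -
  have u: "\<And>j k. is_unit (M$j$k)" "\<And>j. is_unit (d j)" "\<And>j. is_unit (e j)"
    using assms unfolding units_mat_def uf_def by auto
  show ?thesis by (simp add: vec_eq_iff unit_mult u mult.assoc)
qed

lemma sc_mult: fixes M N :: "'a::ring_1 mat3" assumes "uf e"
  shows "sc d M e ** sc (\<lambda>k. uinv (e k)) N f = sc d (M ** N) f"
proof -
  have u: "\<And>j. is_unit (e j)" using assms unfolding uf_def by auto
  have "\<And>i k. (\<Sum>l\<in>UNIV. d i * M$i$l * e l * (uinv (e l) * N$l$k * f k)) = d i * (\<Sum>l\<in>UNIV. M$i$l * N$l$k) * f k"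
  proof -
    fix i k
    have "(\<Sum>l\<in>UNIV. d i * M$i$l * e l * (uinv (e l) * N$l$k * f k)) = (\<Sum>l\<in>UNIV. d i * (M$i$l * N$l$k * f k))"
      by (rule sum.cong) (simp_all add: mult.assoc uinv_mult_cancel u)
    also have "\<dots> = d i * (\<Sum>l\<in>UNIV. M$i$l * N$l$k * f k)" by (simp add: sum_distrib_left)
    also have "(\<Sum>l\<in>UNIV. M$i$l * N$l$k * f k) = (\<Sum>l\<in>UNIV. M$i$l * N$l$k) * f k" by (simp add: sum_distrib_right)
    finally show "?thesis i k" by (simp add: mult.assoc)
  qed
  then show ?thesis by (simp add: vec_eq_iff mm_entry)
qed

lemma sc_mat1: fixes d :: "3 \<Rightarrow> 'a::ring_1" assumes "uf d"
  shows "sc d (mat 1) (\<lambda>k. uinv (d k)) = mat 1"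
  using assms unfolding uf_def by (simp add: vec_eq_iff mat1_entry unitD)

lemma sc_back: fixes M :: "'a::ring_1 mat3" assumes "uf d" "uf e"
  shows "sc (\<lambda>j. uinv (d j)) (sc d M e) (\<lambda>k. uinv (e k)) = M"
proof -
  have u: "\<And>j. is_unit (d j)" "\<And>j. is_unit (e j)" using assms unfolding uf_def by auto
  show ?thesis by (simp add: vec_eq_iff mult.assoc uinv_mult_cancel u unitD)
qed

lemma invertible_sc: fixes M :: "'a::ring_1 mat3" assumes "invertible M" "uf d" "uf e"
  shows "invertible (sc d M e)" "matrix_inv (sc d M e) = sc (\<lambda>k. uinv (e k)) (matrix_inv M) (\<lambda>j. uinv (d j))"
proof -
  note MN = matrix_inv_props[OF assms(1)]
  have ud: "uf (\<lambda>j. uinv (d j))" "uf (\<lambda>j. uinv (e j))" using assms uf_inv by auto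
  have "sc d M e ** sc (\<lambda>k. uinv (e k)) (matrix_inv M) (\<lambda>j. uinv (d j)) = mat 1"
    unfolding sc_mult[OF assms(3)] MN sc_mat1[OF assms(2)] ..
  moreover have "sc (\<lambda>k. uinv (e k)) (matrix_inv M) (\<lambda>j. uinv (d j)) ** sc d M e = mat 1"
  proof -
    have "sc (\<lambda>k. uinv (e k)) (matrix_inv M) (\<lambda>j. uinv (d j)) ** sc (\<lambda>j. uinv (uinv (d j))) M e
        = sc (\<lambda>k. uinv (e k)) (matrix_inv M ** M) e"
      by (rule sc_mult[OF ud(1)])
    moreover have "(\<lambda>j. uinv (uinv (d j))) = d" using assms(2) unfolding uf_def by (simp add: unit_uinv)
    moreover have "sc (\<lambda>k. uinv (e k)) (mat 1) e = mat 1"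
      using sc_mat1[OF ud(2)] assms(3) unfolding uf_def by (simp add: unit_uinv)
    ultimately show ?thesis using MN by simp
  qed
  ultimately show "invertible (sc d M e)" "matrix_inv (sc d M e) = sc (\<lambda>k. uinv (e k)) (matrix_inv M) (\<lambda>j. uinv (d j))"
    using invertibleI matrix_inv_unique by blast+
qed

lemma S_sc: fixes M :: "'a::ring_1 mat3" assumes "M \<in> S_set" "uf d" "uf e"
  shows "sc d M e \<in> S_set"
proof -
  have inv: "invertible M" and uM: "units_mat M" and uN: "units_mat (matrix_inv M)" and iJ: "invertible (J2m M)"
    using assms S_char by auto
  have ud: "uf (\<lambda>j. uinv (d j))" "uf (\<lambda>j. uinv (e j))" using assms uf_inv by auto
  show ?thesis unfolding S_char
    using invertible_sc[OF inv assms(2,3)] units_sc[OF uM assms(2,3)] units_sc[OF uN ud(2,1)]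
      J2m_sc[OF uM assms(2,3)] invertible_sc(1)[OF iJ ud(2,1)] by simp
qed

lemma domJ_char: "M \<in> dom J \<longleftrightarrow> invertible M \<and> units_mat (matrix_inv M)"
  unfolding dom_def J_eq by simp

lemma domJ_sc: fixes M :: "'a::ring_1 mat3" assumes "sc d M e \<in> dom J" "uf d" "uf e"
  shows "M \<in> dom J"
proof -
  let ?X = "sc d M e"
  have i: "invertible ?X" and u: "units_mat (matrix_inv ?X)" using assms(1) domJ_char by auto
  have ud: "uf (\<lambda>j. uinv (d j))" "uf (\<lambda>j. uinv (e j))" using assms uf_inv by auto
  have M: "M = sc (\<lambda>j. uinv (d j)) ?X (\<lambda>k. uinv (e k))" using sc_back[OF assms(2,3)] by simp
  have "invertible M" "matrix_inv M = sc (\<lambda>k. uinv (uinv (e k))) (matrix_inv ?X) (\<lambda>j. uinv (uinv (d j)))"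
    using invertible_sc[OF i ud] M by simp_all
  moreover have "units_mat (sc (\<lambda>k. uinv (uinv (e k))) (matrix_inv ?X) (\<lambda>j. uinv (uinv (d j))))"
    by (rule units_sc[OF u]) (use ud uf_inv in auto)
  ultimately show ?thesis by (simp add: domJ_char)
qed

lemma hat_J2m: "hat_mat M \<Longrightarrow> hat_mat (J2m M)"
  unfolding hat_mat_def by simp

lemma LambdaL_sc: "LambdaL N = sc (\<lambda>j. N$1$1 * uinv (N$j$1)) N (\<lambda>k. uinv (N$1$k))"
  unfolding LambdaL_def by (simp add: vec_eq_iff mult.assoc)

lemma LambdaR_sc: "LambdaR Y = sc (\<lambda>j. uinv (Y$j$1)) Y (\<lambda>k. uinv (Y$1$k) * Y$1$1)"
  unfolding LambdaR_def by (simp add: vec_eq_iff mult.assoc)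

lemma hat_LambdaL: "units_mat (N::'a::ring_1 mat3) \<Longrightarrow> hat_mat (LambdaL N)"
  unfolding hat_mat_def LambdaL_def units_mat_def by (simp add: mult.assoc uinv_mult_cancel unitD)

lemma hat_LambdaR: "units_mat (Y::'a::ring_1 mat3) \<Longrightarrow> hat_mat (LambdaR Y)"
  unfolding hat_mat_def LambdaR_def units_mat_def by (simp add: mult.assoc uinv_mult_cancel unitD)

lemma uf_LL: "units_mat (N::'a::ring_1 mat3) \<Longrightarrow> uf (\<lambda>j. N$1$1 * uinv (N$j$1)) \<and> uf (\<lambda>k. uinv (N$1$k))"
  unfolding units_mat_def uf_def by (simp add: unit_mult unit_uinv)

lemma uf_LR: "units_mat (Y::'a::ring_1 mat3) \<Longrightarrow> uf (\<lambda>j. uinv (Y$j$1)) \<and> uf (\<lambda>k. uinv (Y$1$k) * Y$1$1)"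
  unfolding units_mat_def uf_def by (simp add: unit_mult unit_uinv)

lemma LambdaL_sc_hat: fixes W :: "'a::ring_1 mat3" assumes "hat_mat W" "uf p" "uf q"
  shows "LambdaL (sc p W q) = (\<chi> j k. p 1 * W$j$k * uinv (p 1))"
proof -
  have h: "\<And>k. W$1$k = 1" "\<And>k. W$k$1 = 1" using assms(1) unfolding hat_mat_def by auto
  have u: "\<And>j. is_unit (p j)" "\<And>j. is_unit (q j)" using assms unfolding uf_def by auto
  show ?thesis unfolding LambdaL_def
    by (simp add: vec_eq_iff h unit_mult u mult.assoc uinv_mult_cancel)
qed

lemma LambdaR_sc_hat: fixes W :: "'a::ring_1 mat3" assumes "hat_mat W" "uf p" "uf q"
  shows "LambdaR (sc p W q) = (\<chi> j k. uinv (q 1) * W$j$k * q 1)"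
proof -
  have h: "\<And>k. W$1$k = 1" "\<And>k. W$k$1 = 1" using assms(1) unfolding hat_mat_def by auto
  have u: "\<And>j. is_unit (p j)" "\<And>j. is_unit (q j)" using assms unfolding uf_def by auto
  show ?thesis unfolding LambdaR_def
    by (simp add: vec_eq_iff h unit_mult u mult.assoc uinv_mult_cancel)
qed


lemma S_hat_iff: "A \<in> S_hat \<longleftrightarrow> A \<in> S_set \<and> hat_mat A"
  unfolding S_hat_def by simp

lemma Phi_eq: fixes A :: "'a::ring_1 mat3"
  shows "Phi A = (if A \<in> dom J \<and> hat_mat A \<and> units_mat A then Some (J2m (LambdaL (matrix_inv A))) else None)"
proof (cases "A \<in> dom J \<and> hat_mat A \<and> units_mat A")
  case True
  then have uN: "units_mat (matrix_inv A)" using domJ_char by auto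
  have "units_mat (LambdaL (matrix_inv A))" unfolding LambdaL_sc
    using units_sc[OF uN] uf_LL[OF uN] by simp
  then show ?thesis unfolding Phi_def J2_eq using True by simp
next
  case False
  show ?thesis unfolding Phi_def by (simp only: if_not_P[OF False])
qed

lemma Phi_S: fixes A :: "'a::ring_1 mat3" assumes a: "A \<in> S_hat"
  shows "Phi A = Some (J2m (LambdaL (matrix_inv A)))" "J2m (LambdaL (matrix_inv A)) \<in> S_hat"
    "Phiinv (J2m (LambdaL (matrix_inv A))) = Some A"
proof -
  have S: "A \<in> S_set" and h: "hat_mat A" using a S_hat_iff by auto
  have inv: "invertible A" and uA: "units_mat A" and uN: "units_mat (matrix_inv A)"
    using S S_char by auto
  let ?N = "matrix_inv A"
  define dL where "dL = (\<lambda>j. ?N$1$1 * uinv (?N$j$1))"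
  define eL where "eL = (\<lambda>k. uinv (?N$1$k))"
  have ud: "uf dL" "uf eL" using uf_LL[OF uN] unfolding dL_def eL_def by auto
  have LN: "LambdaL ?N = sc dL ?N eL" unfolding LambdaL_sc dL_def eL_def ..
  have uLN: "units_mat (LambdaL ?N)" unfolding LN by (rule units_sc[OF uN ud])
  have domJ: "A \<in> dom J" using S part1 by blast
  show "Phi A = Some (J2m (LambdaL ?N))" unfolding Phi_eq using domJ h uA by simp
  have B: "J2m (LambdaL ?N) = sc (\<lambda>j. uinv (eL j)) (J2m ?N) (\<lambda>k. uinv (dL k))"
    unfolding LN by (rule J2m_sc[OF uN ud])
  have BS: "J2m (LambdaL ?N) \<in> S_set" unfolding B
    by (rule S_sc[OF J_S(2)[OF S]]) (use ud uf_inv in auto)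
  have hB: "hat_mat (J2m (LambdaL ?N))" by (rule hat_J2m[OF hat_LambdaL[OF uN]])
  show "J2m (LambdaL ?N) \<in> S_hat" using BS hB S_hat_iff by blast
  let ?B = "J2m (LambdaL ?N)"
  have JB: "Jinv ?B = Some (matrix_inv (J2m ?B))" by (rule Jinv_S(1)[OF BS])
  have "J2m ?B = sc dL ?N eL" using J2m_J2m[OF uLN] LN by simp
  then have mB: "matrix_inv (J2m ?B) = sc (\<lambda>k. uinv (eL k)) A (\<lambda>j. uinv (dL j))"
    using invertible_sc(2)[OF inv_of_inv(1)[OF inv] ud] inv_of_inv(2)[OF inv] by simp
  have umB: "units_mat (matrix_inv (J2m ?B))" unfolding mB
    by (rule units_sc[OF uA]) (use ud uf_inv in auto)
  have d1: "uinv (dL 1) = 1" unfolding dL_def using uN unfolding units_mat_def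
    by (simp add: unitD)
  have LR: "LambdaR (matrix_inv (J2m ?B)) = A" unfolding mB
    by (subst LambdaR_sc_hat[OF h]) (use ud uf_inv d1 in \<open>auto simp: vec_eq_iff\<close>)
  have "?B \<in> dom Jinv" using JB by blast
  then show "Phiinv ?B = Some A" unfolding Phiinv_def using hB JB umB LR by simp
qed

lemma Phiinv_S: fixes A :: "'a::ring_1 mat3" assumes a: "A \<in> S_hat"
  shows "Phiinv A = Some (LambdaR (matrix_inv (J2m A)))" "LambdaR (matrix_inv (J2m A)) \<in> S_hat"
    "Phi (LambdaR (matrix_inv (J2m A))) = Some A"
proof -
  have S: "A \<in> S_set" and h: "hat_mat A" using a S_hat_iff by auto
  have inv: "invertible A" and uA: "units_mat A" and iJ: "invertible (J2m A)"
    using S S_char by auto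
  let ?Y = "matrix_inv (J2m A)"
  have YS: "?Y \<in> S_set" and JA: "Jinv A = Some ?Y" using Jinv_S[OF S] by auto
  have uY: "units_mat ?Y" using YS S_char by auto
  have "A \<in> dom Jinv" using JA by blast
  then show "Phiinv A = Some (LambdaR ?Y)" unfolding Phiinv_def using h JA uY by simp
  define E where "E = (\<lambda>j. uinv (?Y$j$1))"
  define E' where "E' = (\<lambda>k. uinv (?Y$1$k) * ?Y$1$1)"
  have ue: "uf E" "uf E'" using uf_LR[OF uY] unfolding E_def E'_def by auto
  have LR: "LambdaR ?Y = sc E ?Y E'" unfolding LambdaR_sc E_def E'_def ..
  have BS: "LambdaR ?Y \<in> S_set" unfolding LR by (rule S_sc[OF YS ue])
  have hB: "hat_mat (LambdaR ?Y)" by (rule hat_LambdaR[OF uY])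
  show "LambdaR ?Y \<in> S_hat" using BS hB S_hat_iff by blast
  have uB: "units_mat (LambdaR ?Y)" using BS S_char by auto
  have domB: "LambdaR ?Y \<in> dom J" using BS part1 by blast
  have mB: "matrix_inv (LambdaR ?Y) = sc (\<lambda>k. uinv (E' k)) (J2m A) (\<lambda>j. uinv (E j))"
    unfolding LR using invertible_sc(2)[OF inv_of_inv(1)[OF iJ] ue] inv_of_inv(2)[OF iJ] by simp
  have e1: "uinv (E' 1) = 1" unfolding E'_def using uY unfolding units_mat_def by (simp add: unitD)
  have "LambdaL (matrix_inv (LambdaR ?Y)) = J2m A" unfolding mB
    by (subst LambdaL_sc_hat[OF hat_J2m[OF h]]) (use ue uf_inv e1 in \<open>auto simp: vec_eq_iff\<close>)
  then show "Phi (LambdaR ?Y) = Some A" unfolding Phi_eq using domB hB uB J2m_J2m[OF uA] by simp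
qed

lemma Phi2: fixes A :: "'a::ring_1 mat3" assumes "A \<in> dom Phi" "the (Phi A) \<in> dom Phi"
  shows "A \<in> S_hat"
proof -
  have domJ: "A \<in> dom J" and h: "hat_mat A" and uA: "units_mat A"
    using assms(1) unfolding Phi_eq dom_def by (auto split: if_splits)
  have inv: "invertible A" and uN: "units_mat (matrix_inv A)" using domJ domJ_char by auto
  let ?N = "matrix_inv A"
  define dL where "dL = (\<lambda>j. ?N$1$1 * uinv (?N$j$1))"
  define eL where "eL = (\<lambda>k. uinv (?N$1$k))"
  have ud: "uf dL" "uf eL" using uf_LL[OF uN] unfolding dL_def eL_def by auto
  have LN: "LambdaL ?N = sc dL ?N eL" unfolding LambdaL_sc dL_def eL_def ..
  have "the (Phi A) = J2m (LambdaL ?N)" unfolding Phi_eq using domJ h uA by simp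
  also have "\<dots> = sc (\<lambda>j. uinv (eL j)) (J2m ?N) (\<lambda>k. uinv (dL k))"
    unfolding LN by (rule J2m_sc[OF uN ud])
  finally have "sc (\<lambda>j. uinv (eL j)) (J2m ?N) (\<lambda>k. uinv (dL k)) \<in> dom J"
    using assms(2) unfolding Phi_eq dom_def by (auto split: if_splits)
  then have "J2m ?N \<in> dom J" by (rule domJ_sc) (use ud uf_inv in auto)
  moreover have "the (J A) = J2m ?N" unfolding J_eq using inv uN by simp
  ultimately have "A \<in> S_set" using domJ2[OF domJ] by simp
  then show ?thesis using h S_hat_iff by blast
qed

lemma part3: "(S_hat :: 'a::ring_1 mat3 set) = dom Phi \<inter> dom Phiinv"
proof (rule set_eqI)
  fix A :: "'a mat3"
  show "A \<in> S_hat \<longleftrightarrow> A \<in> dom Phi \<inter> dom Phiinv"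
  proof
    assume "A \<in> S_hat"
    then show "A \<in> dom Phi \<inter> dom Phiinv" using Phi_S(1) Phiinv_S(1) by blast
  next
    assume a: "A \<in> dom Phi \<inter> dom Phiinv"
    then have "A \<in> dom J" "hat_mat A" unfolding Phi_eq dom_def by (auto split: if_splits)
    moreover have "A \<in> dom Jinv" using a unfolding Phiinv_def dom_def by (auto split: if_splits)
    ultimately show "A \<in> S_hat" using part1 S_hat_iff by blast
  qed
qed

lemma Phi_part: fixes k :: nat assumes "k \<ge> 2"
  shows "dom Phi \<inter> dom Phiinv = dom (mpow (Phi :: 'a::ring_1 mat3 \<Rightarrow> _) k)"
    "bij_betw (\<lambda>M. the (Phi M)) (S_hat :: 'a mat3 set) S_hat"
proof -
  have e: "dom (mpow (Phi :: 'a::ring_1 mat3 \<Rightarrow> _) k) = S_hat"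
    by (rule dom_mpow_eq[of S_hat Phi, OF _ Phi2 assms]) (use Phi_S in blast)
  show "dom Phi \<inter> dom Phiinv = dom (mpow (Phi :: 'a::ring_1 mat3 \<Rightarrow> _) k)" unfolding e by (rule part3[symmetric])
  show "bij_betw (\<lambda>M. the (Phi M)) (S_hat :: 'a mat3 set) S_hat"
  proof (rule bij_betw_byWitness[where f' = "\<lambda>M. the (Phiinv M)"])
    show "\<forall>a\<in>S_hat. the (Phiinv (the (Phi a))) = (a::'a mat3)"
    proof
      fix a :: "'a mat3" assume a: "a \<in> S_hat"
      show "the (Phiinv (the (Phi a))) = a" using Phi_S[OF a] by simp
    qed
    show "\<forall>a\<in>S_hat. the (Phi (the (Phiinv a))) = (a::'a mat3)"
    proof
      fix a :: "'a mat3" assume a: "a \<in> S_hat"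
      show "the (Phi (the (Phiinv a))) = a" using Phiinv_S[OF a] by simp
    qed
    show "(\<lambda>M. the (Phi M)) ` S_hat \<subseteq> (S_hat :: 'a mat3 set)"
    proof (rule image_subsetI)
      fix M :: "'a mat3" assume a: "M \<in> S_hat"
      show "the (Phi M) \<in> S_hat" using Phi_S[OF a] by simp
    qed
    show "(\<lambda>M. the (Phiinv M)) ` S_hat \<subseteq> (S_hat :: 'a mat3 set)"
    proof (rule image_subsetI)
      fix M :: "'a mat3" assume a: "M \<in> S_hat"
      show "the (Phiinv M) \<in> S_hat" using Phiinv_S[OF a] by simp
    qed
  qed
qed

theorem theorem2:
  fixes k :: nat
  assumes "k \<ge> 2"
  shows "(S_set :: 'a::ring_1 mat3 set) = dom J \<inter> dom Jinv \<and>
         dom J \<inter> dom Jinv = dom (mpow (J :: 'a mat3 \<Rightarrow> _) k) \<and>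
         (S_hat :: 'a mat3 set) = dom Phi \<inter> dom Phiinv \<and>
         dom Phi \<inter> dom Phiinv = dom (mpow (Phi :: 'a mat3 \<Rightarrow> _) k) \<and>
         bij_betw (\<lambda>M. the (J M)) (S_set :: 'a mat3 set) S_set \<and>
         bij_betw (\<lambda>M. the (Phi M)) (S_hat :: 'a mat3 set) S_hat"
  using part1 J_part[OF assms] part3 Phi_part[OF assms] by blast


end
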